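(* For every parsummable category $\mathcal C$, the inclusion $\Theta(\mathcal C)\hookrightarrow\Phi\Sigma(\mathcal C)$ is an equivalence of underlying categories; these inclusions form a natural transformation $\Theta\Rightarrow\Phi\Sigma$ of endofunctors of $\mathbf{ParSumCat}$ that is a levelwise underlying equivalence.
   Context: Let $\omega=\{1,2,\dots\}$, $\mathbf m=\{1,\dots,m\}$, $\mathcal M$ the monoid of injections $\omega\to\omega$. A parsummable category is a small $E\mathcal M$-category (strict action of the chaotic category on $\mathcal M$; $u_*$ the action, $[v,u]\colon u_*\Rightarrow v_*$) all of whose objects have finite support (intersection of finite $A\subset\omega$ with $u_*X=X$ for $u$ fixing $A$ pointwise), with an object $0$ of empty support and a strictly unital, associative, commutative, equivariant sum on disjointly supported pairs; $\mathbf{ParSumCat}$ has morphisms the equivariant functors preserving $0,+$. For injections $\phi,\phi'\colon\mathbf m\times\omega\to\omega$: $\phi_*(X_\bullet)=\sum_i\phi(i,-)_*(X_i)$, $[\phi',\phi]_{X_\bullet}=\sum_i[\phi'(i,-),\phi(i,-)]_{X_i}$. $\Sigma(\mathcal C)$ is the permutative category with objects finite sequences of objects of $\mathcal C$ (empty sequence $\epsilon$ is the unit), morphisms $(X_1,\dots,X_m)\to(Y_1,\dots,Y_n)$ classes $[\psi,f,\phi]$ (injections $\phi\colon\mathbf m\times\omega\to\omega$, $\psi\colon\mathbf n\times\omega\to\omega$, $f\colon\phi_*(X_\bullet)\to\psi_*(Y_\bullet)$) modulo $(\psi,f,\phi)\sim(\psi',[\psi',\psi]f[\phi,\phi'],\phi')$,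 composition $[\rho,g,\theta][\psi,f,\phi]=[\rho,g[\theta,\psi]f,\phi]$, tensor product concatenation and $[\psi,f,\phi]\otimes[\rho,g,\theta]=[\psi+\rho,f+g,\phi+\theta]$ for disjoint-image representatives, symmetry $[\bar\phi,\mathrm{id},\phi]$; $\Sigma(F)$ applies $F$ entrywise and to middle terms. For a small permutative category $\mathscr P$ with unit $\mathbf 1$, $\Phi(\mathscr P)$ is the parsummable category with objects sequences $(P_1,P_2,\dots)$ with $P_i=\mathbf 1$ for almost all $i$, morphisms $P\to Q$ the morphisms $\bigotimes_{i\in\omega}P_i\to\bigotimes_{i\in\omega}Q_i$ in $\mathscr P$, $(u_*P)_i=P_j$ if $i=u(j)$ and $\mathbf 1$ otherwise, structure isomorphisms given by coherence isomorphisms, support $\{i:P_i\ne\mathbf1\}$, and sum by merging disjointly supported sequences; $\Phi(F)$ applies $F$ entrywise. $\Theta(\mathcal C)$ is the full subcategory of $\Phi\Sigma(\mathcal C)$ on the sequences $(X^\bullet_1,X^\bullet_2,\dots)$ each of whose entries is either $\epsilon$ or a $1$-tuple; it is closed under the $E\mathcal M$-action and sum, hence parsummable, and $\Theta$ is a subfunctor of $\Phi\Sigma$. *)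

theory Defs
  imports Main "HOL-Library.Nat_Bijection"
begin

text \<open>Conventions: omega = {1,2,...} is modelled by the type nat (reindexing
by a shift), and the finite set m = {1..m} by {0..<m}.  Injections
m x omega -> omega are curried functions nat => nat => nat that are injective on
{..<m} x UNIV.\<close>

section \<open>Small categories\<close>

record ('o,'a) cat =
  obj :: "'o set"
  arr :: "'a set"
  cdom :: "'a \<Rightarrow> 'o"
  ccod :: "'a \<Rightarrow> 'o"
  cid :: "'o \<Rightarrow> 'a"
  ccomp :: "'a \<Rightarrow> 'a \<Rightarrow> 'a"   (* ccomp C g f = g o f *)

definition hom :: "('o,'a,'z) cat_scheme \<Rightarrow> 'o \<Rightarrow> 'o \<Rightarrow> 'a set" where
  "hom C X Y = {f \<in> arr C. cdom C f = X \<and> ccod C f = Y}"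

definition is_cat :: "('o,'a,'z) cat_scheme \<Rightarrow> bool" where
  "is_cat C \<longleftrightarrow>
     (\<forall>f\<in>arr C. cdom C f \<in> obj C \<and> ccod C f \<in> obj C) \<and>
     (\<forall>X\<in>obj C. cid C X \<in> hom C X X) \<and>
     (\<forall>f\<in>arr C. \<forall>g\<in>arr C. ccod C f = cdom C g \<longrightarrow>
         ccomp C g f \<in> hom C (cdom C f) (ccod C g)) \<and>
     (\<forall>f\<in>arr C. ccomp C (cid C (ccod C f)) f = f \<and> ccomp C f (cid C (cdom C f)) = f) \<and>
     (\<forall>f\<in>arr C. \<forall>g\<in>arr C. \<forall>h\<in>arr C. ccod C f = cdom C g \<and> ccod C g = cdom C h \<longrightarrow>
         ccomp C h (ccomp C g f) = ccomp C (ccomp C h g) f)"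

definition is_functor :: "('o,'a,'z) cat_scheme \<Rightarrow> ('p,'b,'y) cat_scheme \<Rightarrow>
    ('o \<Rightarrow> 'p) \<Rightarrow> ('a \<Rightarrow> 'b) \<Rightarrow> bool" where
  "is_functor C D Fo Fa \<longleftrightarrow>
     (\<forall>X\<in>obj C. Fo X \<in> obj D) \<and>
     (\<forall>f\<in>arr C. Fa f \<in> hom D (Fo (cdom C f)) (Fo (ccod C f))) \<and>
     (\<forall>X\<in>obj C. Fa (cid C X) = cid D (Fo X)) \<and>
     (\<forall>f\<in>arr C. \<forall>g\<in>arr C. ccod C f = cdom C g \<longrightarrow>
         Fa (ccomp C g f) = ccomp D (Fa g) (Fa f))"

definition is_iso :: "('o,'a,'z) cat_scheme \<Rightarrow> 'a \<Rightarrow> bool" where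
  "is_iso C f \<longleftrightarrow> f \<in> arr C \<and>
     (\<exists>g\<in>hom C (ccod C f) (cdom C f).
        ccomp C g f = cid C (cdom C f) \<and> ccomp C f g = cid C (ccod C f))"

definition nat_iso :: "('o,'a,'z) cat_scheme \<Rightarrow> ('p,'b,'y) cat_scheme \<Rightarrow>
    ('o \<Rightarrow> 'p) \<Rightarrow> ('a \<Rightarrow> 'b) \<Rightarrow> ('o \<Rightarrow> 'p) \<Rightarrow> ('a \<Rightarrow> 'b) \<Rightarrow> ('o \<Rightarrow> 'b) \<Rightarrow> bool" where
  "nat_iso C D Fo Fa Go Ga eta \<longleftrightarrow>
     (\<forall>X\<in>obj C. eta X \<in> hom D (Fo X) (Go X) \<and> is_iso D (eta X)) \<and>
     (\<forall>f\<in>arr C. ccomp D (eta (ccod C f)) (Fa f) = ccomp D (Ga f) (eta (cdom C f)))"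

definition cat_equiv :: "('o,'a,'z) cat_scheme \<Rightarrow> ('p,'b,'y) cat_scheme \<Rightarrow>
    ('o \<Rightarrow> 'p) \<Rightarrow> ('a \<Rightarrow> 'b) \<Rightarrow> bool" where
  "cat_equiv C D Fo Fa \<longleftrightarrow> is_functor C D Fo Fa \<and>
     (\<exists>Go Ga eta eps. is_functor D C Go Ga \<and>
        nat_iso C C id id (Go \<circ> Fo) (Ga \<circ> Fa) eta \<and>
        nat_iso D D (Fo \<circ> Go) (Fa \<circ> Ga) id id eps)"

section \<open>Parsummable categories\<close>

type_synonym injf = "nat \<Rightarrow> nat"

definition Minj :: "injf set" where
  "Minj = {u. inj u}"

record ('o,'a) pscat = "('o,'a) cat" +
  act :: "injf \<Rightarrow> 'o \<Rightarrow> 'o"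
  act_ar :: "injf \<Rightarrow> 'a \<Rightarrow> 'a"
  brk :: "injf \<Rightarrow> injf \<Rightarrow> 'o \<Rightarrow> 'a"    (* brk C v u X = [v,u]_X : u_* X \<rightarrow> v_* X *)
  zer :: "'o"
  pls :: "'o \<Rightarrow> 'o \<Rightarrow> 'o"
  pls_ar :: "'a \<Rightarrow> 'a \<Rightarrow> 'a"

text \<open>Strict action of the chaotic category E M on C.\<close>
definition is_EM :: "('o,'a,'z) pscat_scheme \<Rightarrow> bool" where
  "is_EM C \<longleftrightarrow> is_cat C \<and>
     (\<forall>u\<in>Minj. is_functor C C (act C u) (act_ar C u)) \<and>
     (\<forall>X\<in>obj C. act C id X = X) \<and> (\<forall>f\<in>arr C. act_ar C id f = f) \<and>
     (\<forall>u\<in>Minj. \<forall>v\<in>Minj. \<forall>X\<in>obj C. act C (u \<circ> v) X = act C u (act C v X)) \<and>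
     (\<forall>u\<in>Minj. \<forall>v\<in>Minj. \<forall>f\<in>arr C. act_ar C (u \<circ> v) f = act_ar C u (act_ar C v f)) \<and>
     (\<forall>u\<in>Minj. \<forall>v\<in>Minj. \<forall>X\<in>obj C. brk C v u X \<in> hom C (act C u X) (act C v X)) \<and>
     (\<forall>u\<in>Minj. \<forall>X\<in>obj C. brk C u u X = cid C (act C u X)) \<and>
     (\<forall>u\<in>Minj. \<forall>v\<in>Minj. \<forall>w\<in>Minj. \<forall>X\<in>obj C.
         ccomp C (brk C w v X) (brk C v u X) = brk C w u X) \<and>
     (\<forall>u\<in>Minj. \<forall>v\<in>Minj. \<forall>f\<in>arr C.
         ccomp C (brk C v u (ccod C f)) (act_ar C u f) = ccomp C (act_ar C v f) (brk C v u (cdom C f))) \<and>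
     (\<forall>u\<in>Minj. \<forall>v\<in>Minj. \<forall>w\<in>Minj. \<forall>X\<in>obj C.
         act_ar C w (brk C v u X) = brk C (w \<circ> v) (w \<circ> u) X) \<and>
     (\<forall>u\<in>Minj. \<forall>v\<in>Minj. \<forall>w\<in>Minj. \<forall>X\<in>obj C.
         brk C v u (act C w X) = brk C (v \<circ> w) (u \<circ> w) X)"

definition fixes_pw :: "nat set \<Rightarrow> injf \<Rightarrow> bool" where
  "fixes_pw A u \<longleftrightarrow> (\<forall>a\<in>A. u a = a)"

definition supp :: "('o,'a,'z) pscat_scheme \<Rightarrow> 'o \<Rightarrow> nat set" where
  "supp C X = \<Inter>{A. finite A \<and> (\<forall>u\<in>Minj. fixes_pw A u \<longrightarrow> act C u X = X)}"

definition fin_supp :: "('o,'a,'z) pscat_scheme \<Rightarrow> 'o \<Rightarrow> bool" where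
  "fin_supp C X \<longleftrightarrow> (\<exists>A. finite A \<and> (\<forall>u\<in>Minj. fixes_pw A u \<longrightarrow> act C u X = X))"

definition dsj :: "('o,'a,'z) pscat_scheme \<Rightarrow> 'o \<Rightarrow> 'o \<Rightarrow> bool" where
  "dsj C X Y \<longleftrightarrow> supp C X \<inter> supp C Y = {}"

definition is_parsummable :: "('o,'a,'z) pscat_scheme \<Rightarrow> bool" where
  "is_parsummable C \<longleftrightarrow> is_EM C \<and>
     (\<forall>X\<in>obj C. fin_supp C X) \<and>
     zer C \<in> obj C \<and> supp C (zer C) = {} \<and>
     (\<forall>X\<in>obj C. \<forall>Y\<in>obj C. dsj C X Y \<longrightarrow> pls C X Y \<in> obj C) \<and>
     (\<forall>f\<in>arr C. \<forall>g\<in>arr C. dsj C (cdom C f) (cdom C g) \<and> dsj C (ccod C f) (ccod C g) \<longrightarrow>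
         pls_ar C f g \<in> hom C (pls C (cdom C f) (cdom C g)) (pls C (ccod C f) (ccod C g))) \<and>
     (\<forall>X\<in>obj C. \<forall>Y\<in>obj C. dsj C X Y \<longrightarrow> pls_ar C (cid C X) (cid C Y) = cid C (pls C X Y)) \<and>
     (\<forall>f\<in>arr C. \<forall>f'\<in>arr C. \<forall>g\<in>arr C. \<forall>g'\<in>arr C.
         ccod C f = cdom C f' \<and> ccod C g = cdom C g' \<and>
         dsj C (cdom C f) (cdom C g) \<and> dsj C (ccod C f) (ccod C g) \<and> dsj C (ccod C f') (ccod C g') \<longrightarrow>
         pls_ar C (ccomp C f' f) (ccomp C g' g) = ccomp C (pls_ar C f' g') (pls_ar C f g)) \<and>
     (\<forall>X\<in>obj C. pls C X (zer C) = X) \<and>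
     (\<forall>f\<in>arr C. pls_ar C f (cid C (zer C)) = f) \<and>
     (\<forall>X\<in>obj C. \<forall>Y\<in>obj C. \<forall>Z\<in>obj C. dsj C X Y \<and> dsj C X Z \<and> dsj C Y Z \<longrightarrow>
         pls C (pls C X Y) Z = pls C X (pls C Y Z)) \<and>
     (\<forall>f\<in>arr C. \<forall>g\<in>arr C. \<forall>h\<in>arr C.
         dsj C (cdom C f) (cdom C g) \<and> dsj C (cdom C f) (cdom C h) \<and> dsj C (cdom C g) (cdom C h) \<and>
         dsj C (ccod C f) (ccod C g) \<and> dsj C (ccod C f) (ccod C h) \<and> dsj C (ccod C g) (ccod C h) \<longrightarrow>
         pls_ar C (pls_ar C f g) h = pls_ar C f (pls_ar C g h)) \<and>
     (\<forall>X\<in>obj C. \<forall>Y\<in>obj C. dsj C X Y \<longrightarrow> pls C X Y = pls C Y X) \<and>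
     (\<forall>f\<in>arr C. \<forall>g\<in>arr C. dsj C (cdom C f) (cdom C g) \<and> dsj C (ccod C f) (ccod C g) \<longrightarrow>
         pls_ar C f g = pls_ar C g f) \<and>
     (\<forall>u\<in>Minj. \<forall>X\<in>obj C. \<forall>Y\<in>obj C. dsj C X Y \<longrightarrow>
         act C u (pls C X Y) = pls C (act C u X) (act C u Y)) \<and>
     (\<forall>u\<in>Minj. \<forall>f\<in>arr C. \<forall>g\<in>arr C. dsj C (cdom C f) (cdom C g) \<and> dsj C (ccod C f) (ccod C g) \<longrightarrow>
         act_ar C u (pls_ar C f g) = pls_ar C (act_ar C u f) (act_ar C u g)) \<and>
     (\<forall>u\<in>Minj. \<forall>v\<in>Minj. \<forall>X\<in>obj C. \<forall>Y\<in>obj C. dsj C X Y \<longrightarrow>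
         brk C v u (pls C X Y) = pls_ar C (brk C v u X) (brk C v u Y))"

definition is_psmor :: "('o,'a,'z) pscat_scheme \<Rightarrow> ('p,'b,'y) pscat_scheme \<Rightarrow>
    ('o \<Rightarrow> 'p) \<Rightarrow> ('a \<Rightarrow> 'b) \<Rightarrow> bool" where
  "is_psmor C D Fo Fa \<longleftrightarrow> is_functor C D Fo Fa \<and>
     (\<forall>u\<in>Minj. \<forall>X\<in>obj C. Fo (act C u X) = act D u (Fo X)) \<and>
     (\<forall>u\<in>Minj. \<forall>f\<in>arr C. Fa (act_ar C u f) = act_ar D u (Fa f)) \<and>
     (\<forall>u\<in>Minj. \<forall>v\<in>Minj. \<forall>X\<in>obj C. Fa (brk C v u X) = brk D v u (Fo X)) \<and>
     Fo (zer C) = zer D \<and>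
     (\<forall>X\<in>obj C. \<forall>Y\<in>obj C. dsj C X Y \<longrightarrow> Fo (pls C X Y) = pls D (Fo X) (Fo Y)) \<and>
     (\<forall>f\<in>arr C. \<forall>g\<in>arr C. dsj C (cdom C f) (cdom C g) \<and> dsj C (ccod C f) (ccod C g) \<longrightarrow>
         Fa (pls_ar C f g) = pls_ar D (Fa f) (Fa g))"

section \<open>The category Sigma(C) (only what Phi Sigma(C) needs)\<close>

type_synonym minj = "nat \<Rightarrow> nat \<Rightarrow> nat"
type_synonym 'a trip = "minj \<times> 'a \<times> minj"   (* (psi, f, phi) *)

definition injm :: "nat \<Rightarrow> minj \<Rightarrow> bool" where
  "injm m phi \<longleftrightarrow> inj_on (\<lambda>(i,j). phi i j) ({..<m} \<times> UNIV)"

definition imgm :: "nat \<Rightarrow> minj \<Rightarrow> nat set" where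
  "imgm m phi = (\<lambda>(i,j). phi i j) ` ({..<m} \<times> UNIV)"

definition lsum :: "('o,'a,'z) pscat_scheme \<Rightarrow> 'o list \<Rightarrow> 'o" where
  "lsum C xs = foldr (pls C) xs (zer C)"

definition lsum_ar :: "('o,'a,'z) pscat_scheme \<Rightarrow> 'a list \<Rightarrow> 'a" where
  "lsum_ar C fs = foldr (pls_ar C) fs (cid C (zer C))"

definition phis :: "('o,'a,'z) pscat_scheme \<Rightarrow> minj \<Rightarrow> 'o list \<Rightarrow> 'o" where
  "phis C phi Xs = lsum C (map (\<lambda>i. act C (phi i) (Xs ! i)) [0..<length Xs])"

definition brks :: "('o,'a,'z) pscat_scheme \<Rightarrow> minj \<Rightarrow> minj \<Rightarrow> 'o list \<Rightarrow> 'a" where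
  "brks C phi' phi Xs = lsum_ar C (map (\<lambda>i. brk C (phi' i) (phi i) (Xs ! i)) [0..<length Xs])"

definition sig_trip :: "('o,'a,'z) pscat_scheme \<Rightarrow> 'o list \<Rightarrow> 'o list \<Rightarrow> 'a trip \<Rightarrow> bool" where
  "sig_trip C Xs Ys t = (case t of (psi, f, phi) \<Rightarrow>
      injm (length Xs) phi \<and> injm (length Ys) psi \<and> f \<in> hom C (phis C phi Xs) (phis C psi Ys))"

text \<open>The equivalence class of (psi,f,phi): all (psi', [psi',psi] f [phi,phi'], phi').\<close>
definition sig_cls :: "('o,'a,'z) pscat_scheme \<Rightarrow> 'o list \<Rightarrow> 'o list \<Rightarrow> 'a trip \<Rightarrow> 'a trip set" where
  "sig_cls C Xs Ys t = (case t of (psi, f, phi) \<Rightarrow>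
      {(psi', ccomp C (brks C psi' psi Ys) (ccomp C f (brks C phi phi' Xs)), phi') | psi' phi'.
          injm (length Xs) phi' \<and> injm (length Ys) psi'})"

definition is_sig_cls :: "('o,'a,'z) pscat_scheme \<Rightarrow> 'o list \<Rightarrow> 'o list \<Rightarrow> 'a trip set \<Rightarrow> bool" where
  "is_sig_cls C Xs Ys c \<longleftrightarrow> set Xs \<subseteq> obj C \<and> set Ys \<subseteq> obj C \<and>
     (\<exists>t. sig_trip C Xs Ys t \<and> c = sig_cls C Xs Ys t)"

definition rep :: "'a trip set \<Rightarrow> 'a trip" where
  "rep c = (SOME t. t \<in> c)"

definition sig_comp :: "('o,'a,'z) pscat_scheme \<Rightarrow> 'o list \<Rightarrow> 'o list \<Rightarrow> 'o list \<Rightarrow>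
    'a trip set \<Rightarrow> 'a trip set \<Rightarrow> 'a trip set" where
  "sig_comp C Xs Ys Zs c2 c1 = (case rep c1 of (psi, f, phi) \<Rightarrow> case rep c2 of (rho, g, theta) \<Rightarrow>
      sig_cls C Xs Zs (rho, ccomp C g (ccomp C (brks C theta psi Ys) f), phi))"

definition pe :: minj where
  "pe i j = prod_encode (i, j)"

definition sig_idc :: "('o,'a,'z) pscat_scheme \<Rightarrow> 'o list \<Rightarrow> 'a trip set" where
  "sig_idc C Xs = sig_cls C Xs Xs (pe, cid C (phis C pe Xs), pe)"

section \<open>Phi Sigma(C)\<close>

text \<open>Objects: sequences P : omega -> Sigma(C)-objects, almost all equal to the
empty sequence (the unit of Sigma(C)).  Since the tensor product of Sigma(C) is
concatenation (strictly associative and unital), the infinite tensor product of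
such a sequence is the concatenation of its entries, computed by catP.\<close>

type_synonym 'o pobj = "nat \<Rightarrow> 'o list"
type_synonym ('o,'a) parr = "'o pobj \<times> 'o pobj \<times> 'a trip set"

definition bnd :: "'o pobj \<Rightarrow> nat" where
  "bnd P = (LEAST N. \<forall>i\<ge>N. P i = [])"

definition catP :: "'o pobj \<Rightarrow> 'o list" where
  "catP P = concat (map P [0..<bnd P])"

text \<open>labels (i,t): t-th entry of the i-th block, in the order of catP\<close>
definition labs :: "'o pobj \<Rightarrow> (nat \<times> nat) list" where
  "labs P = concat (map (\<lambda>i. map (\<lambda>t. (i, t)) [0..<length (P i)]) [0..<bnd P])"

definition posn :: "'o pobj \<Rightarrow> nat \<times> nat \<Rightarrow> nat" where
  "posn P l = (LEAST k. k < length (labs P) \<and> labs P ! k = l)"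

text \<open>reindex an injection phi indexing catP P along a label map from Q to P\<close>
definition relab :: "'o pobj \<Rightarrow> 'o pobj \<Rightarrow> (nat \<times> nat \<Rightarrow> nat \<times> nat) \<Rightarrow> minj \<Rightarrow> minj" where
  "relab P Q g phi = (\<lambda>k. phi (posn P (g (labs Q ! k))))"

definition ul :: "injf \<Rightarrow> nat \<times> nat \<Rightarrow> nat \<times> nat" where
  "ul u l = (inv u (fst l), snd l)"

definition PhiOb :: "('o,'a,'z) pscat_scheme \<Rightarrow> 'o pobj set" where
  "PhiOb C = {P. (\<forall>i. set (P i) \<subseteq> obj C) \<and> finite {i. P i \<noteq> []}}"

definition PhiAr :: "('o,'a,'z) pscat_scheme \<Rightarrow> ('o,'a) parr set" where
  "PhiAr C = {(P, Q, c). P \<in> PhiOb C \<and> Q \<in> PhiOb C \<and> is_sig_cls C (catP P) (catP Q) c}"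

definition phi_comp :: "('o,'a,'z) pscat_scheme \<Rightarrow> ('o,'a) parr \<Rightarrow> ('o,'a) parr \<Rightarrow> ('o,'a) parr" where
  "phi_comp C b a = (fst a, fst (snd b),
      sig_comp C (catP (fst a)) (catP (fst (snd a))) (catP (fst (snd b))) (snd (snd b)) (snd (snd a)))"

definition phi_id :: "('o,'a,'z) pscat_scheme \<Rightarrow> 'o pobj \<Rightarrow> ('o,'a) parr" where
  "phi_id C P = (P, P, sig_idc C (catP P))"

definition phi_act :: "injf \<Rightarrow> 'o pobj \<Rightarrow> 'o pobj" where
  "phi_act u P = (\<lambda>i. if i \<in> range u then P (inv u i) else [])"

text \<open>u_* f = coherence iso o f o coherence iso^{-1}, written out in Sigma(C)\<close>
definition phi_act_ar :: "('o,'a,'z) pscat_scheme \<Rightarrow> injf \<Rightarrow> ('o,'a) parr \<Rightarrow> ('o,'a) parr" where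
  "phi_act_ar C u a = (case a of (P, Q, c) \<Rightarrow> case rep c of (psi, f, phi) \<Rightarrow>
      (phi_act u P, phi_act u Q,
       sig_cls C (catP (phi_act u P)) (catP (phi_act u Q))
         (relab Q (phi_act u Q) (ul u) psi, f, relab P (phi_act u P) (ul u) phi)))"

text \<open>[v,u]_P : u_* P -> v_* P, the coherence isomorphism of Sigma(C)\<close>
definition phi_brk :: "('o,'a,'z) pscat_scheme \<Rightarrow> injf \<Rightarrow> injf \<Rightarrow> 'o pobj \<Rightarrow> ('o,'a) parr" where
  "phi_brk C v u P = (phi_act u P, phi_act v P,
      sig_cls C (catP (phi_act u P)) (catP (phi_act v P))
        (relab P (phi_act v P) (ul v) pe, cid C (phis C pe (catP P)), relab P (phi_act u P) (ul u) pe))"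

definition phi_pls :: "'o pobj \<Rightarrow> 'o pobj \<Rightarrow> 'o pobj" where
  "phi_pls P Q = (\<lambda>i. P i @ Q i)"

definition mrg :: "'o pobj \<Rightarrow> 'o pobj \<Rightarrow> minj \<Rightarrow> minj \<Rightarrow> minj" where
  "mrg P Q phi theta = (\<lambda>k. case labs (phi_pls P Q) ! k of (i, t) \<Rightarrow>
      if P i \<noteq> [] then phi (posn P (i, t)) else theta (posn Q (i, t)))"

text \<open>sum of morphisms: choose disjoint-image representatives, sum the middle
terms in C, and transport along the coherence isomorphisms (written out)\<close>
definition phi_pls_ar :: "('o,'a,'z) pscat_scheme \<Rightarrow> ('o,'a) parr \<Rightarrow> ('o,'a) parr \<Rightarrow> ('o,'a) parr" where
  "phi_pls_ar C a b = (case a of (P, P', c1) \<Rightarrow> case b of (Q, Q', c2) \<Rightarrow>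
      case (SOME (t1, t2). t1 \<in> c1 \<and> t2 \<in> c2 \<and>
              imgm (length (catP P)) (snd (snd t1)) \<inter> imgm (length (catP Q)) (snd (snd t2)) = {} \<and>
              imgm (length (catP P')) (fst t1) \<inter> imgm (length (catP Q')) (fst t2) = {}) of
        ((psi, f, phi), (rho, g, theta)) \<Rightarrow>
          (phi_pls P Q, phi_pls P' Q',
           sig_cls C (catP (phi_pls P Q)) (catP (phi_pls P' Q'))
             (mrg P' Q' psi rho, pls_ar C f g, mrg P Q phi theta)))"

definition PhiSig :: "('o,'a,'z) pscat_scheme \<Rightarrow> ('o pobj, ('o,'a) parr) pscat" where
  "PhiSig C = \<lparr> obj = PhiOb C, arr = PhiAr C, cdom = fst, ccod = (\<lambda>a. fst (snd a)),
      cid = phi_id C, ccomp = phi_comp C,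
      act = phi_act, act_ar = phi_act_ar C, brk = phi_brk C,
      zer = (\<lambda>_. []), pls = phi_pls, pls_ar = phi_pls_ar C \<rparr>"

definition ThetaOb :: "('o,'a,'z) pscat_scheme \<Rightarrow> 'o pobj set" where
  "ThetaOb C = {P \<in> PhiOb C. \<forall>i. length (P i) \<le> 1}"

definition Theta :: "('o,'a,'z) pscat_scheme \<Rightarrow> ('o pobj, ('o,'a) parr) pscat" where
  "Theta C = (PhiSig C) \<lparr> obj := ThetaOb C,
      arr := {a \<in> PhiAr C. fst a \<in> ThetaOb C \<and> fst (snd a) \<in> ThetaOb C} \<rparr>"

definition PS_ob :: "('o \<Rightarrow> 'p) \<Rightarrow> 'o pobj \<Rightarrow> 'p pobj" where
  "PS_ob Fo P = (\<lambda>i. map Fo (P i))"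

definition PS_ar :: "('p,'b,'y) pscat_scheme \<Rightarrow> ('o \<Rightarrow> 'p) \<Rightarrow> ('a \<Rightarrow> 'b) \<Rightarrow>
    ('o,'a) parr \<Rightarrow> ('p,'b) parr" where
  "PS_ar D Fo Fa a = (case a of (P, Q, c) \<Rightarrow> case rep c of (psi, f, phi) \<Rightarrow>
      (PS_ob Fo P, PS_ob Fo Q, sig_cls D (catP (PS_ob Fo P)) (catP (PS_ob Fo Q)) (psi, Fa f, phi)))"

end

theory Submission
  imports Defs "HOL-Library.Infinite_Set"
begin

definition sups :: "('o,'a,'z) pscat_scheme \<Rightarrow> nat set \<Rightarrow> 'o \<Rightarrow> bool" where
  "sups C A X \<longleftrightarrow> finite A \<and> (\<forall>u\<in>Minj. fixes_pw A u \<longrightarrow> act C u X = X)"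

lemma ext_bij:
  fixes w :: "nat \<Rightarrow> nat"
  assumes "finite A" "inj w"
  shows "\<exists>W. bij W \<and> (\<forall>a\<in>A. W a = w a)"
proof -
  have iB: "infinite (- A)" using assms(1) by (simp add: Compl_eq_Diff_UNIV infinite_UNIV_nat Diff_infinite_finite)
  have iR: "infinite (- (w ` A))" using assms(1) by (simp add: Compl_eq_Diff_UNIV infinite_UNIV_nat Diff_infinite_finite)
  have b1: "bij_betw (enumerate (- A)) UNIV (- A)" by (rule bij_enumerate[OF iB])
  have b2: "bij_betw (enumerate (- (w ` A))) UNIV (- (w ` A))" by (rule bij_enumerate[OF iR])
  define g where "g = enumerate (- (w ` A)) \<circ> inv_into UNIV (enumerate (- A))"
  have bg: "bij_betw g (- A) (- (w ` A))" unfolding g_def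
    using bij_betw_trans[OF bij_betw_inv_into[OF b1] b2] .
  define W where "W x = (if x \<in> A then w x else g x)" for x
  have bw: "bij_betw w A (w ` A)" using assms(2) by (simp add: bij_betw_imageI inj_on_subset)
  have 1: "bij_betw W A (w ` A)" using bw by (rule bij_betw_cong[THEN iffD1, rotated]) (simp add: W_def)
  have 2: "bij_betw W (- A) (- (w ` A))" using bg by (rule bij_betw_cong[THEN iffD1, rotated]) (simp add: W_def)
  have "bij_betw W (A \<union> - A) (w ` A \<union> - (w ` A))"
    by (rule bij_betw_combine[OF 1 2]) auto
  then have "bij W" by simp
  then show ?thesis by (auto simp: W_def)
qed

lemma agree:
  assumes em: "is_EM C" and X: "X \<in> obj C" and s: "sups C A X" and w: "inj w" "inj w'"
    and ag: "\<forall>a\<in>A. w a = w' a"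
  shows "act C w X = act C w' X"
proof -
  have fA: "finite A" using s by (simp add: sups_def)
  obtain W where W: "bij W" "\<forall>a\<in>A. W a = w a" using ext_bij[OF fA w(1)] by blast
  have key: "act C v X = act C W X" if v: "inj v" "\<forall>a\<in>A. W a = v a" for v
  proof -
    define s where "s = inv W \<circ> v"
    have "inj s" unfolding s_def using v(1) W(1) by (simp add: bij_is_inj bij_imp_bij_inv inj_compose)
    moreover have "fixes_pw A s" unfolding fixes_pw_def s_def using v(2) W(1)
      by (metis bij_is_inj comp_apply inv_f_f)
    ultimately have sX: "act C s X = X" using s by (simp add: sups_def Minj_def)
    have Ws: "W \<circ> s = v" unfolding s_def using W(1) by (auto simp: bij_is_surj surj_f_inv_f)
    have "act C (W \<circ> s) X = act C W (act C s X)"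
      using em X \<open>inj s\<close> W(1) unfolding is_EM_def Minj_def by (simp add: bij_is_inj)
    then show ?thesis using Ws sX by simp
  qed
  show ?thesis using key[OF w(1)] key[OF w(2)] W(2) ag by simp
qed

lemma EM_cat: "is_EM C \<Longrightarrow> is_cat C" by (simp add: is_EM_def)
lemma PS_EM: "is_parsummable C \<Longrightarrow> is_EM C" by (simp add: is_parsummable_def)

lemma sups_act:
  assumes em: "is_EM C" and X: "X \<in> obj C" and s: "sups C A X" and u: "inj u"
  shows "sups C (u ` A) (act C u X)"
  unfolding sups_def
proof (intro conjI ballI impI)
  show "finite (u ` A)" using s by (simp add: sups_def)
  fix v assume v: "v \<in> Minj" "fixes_pw (u ` A) v"
  have "act C v (act C u X) = act C (v \<circ> u) X"
    using em X v u unfolding is_EM_def Minj_def by simp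
  also have "\<dots> = act C u X"
    by (rule agree[OF em X s]) (use v u in \<open>auto simp: Minj_def fixes_pw_def inj_compose\<close>)
  finally show "act C v (act C u X) = act C u X" .
qed

lemma supp_sub: "sups C A X \<Longrightarrow> supp C X \<subseteq> A"
  unfolding supp_def sups_def by blast

lemma sups_pls:
  assumes ps: "is_parsummable C" and X: "X \<in> obj C" and Y: "Y \<in> obj C"
    and sX: "sups C A X" and sY: "sups C B Y" and d: "dsj C X Y"
  shows "sups C (A \<union> B) (pls C X Y)"
  unfolding sups_def
proof (intro conjI ballI impI)
  show "finite (A \<union> B)" using sX sY by (simp add: sups_def)
  fix v assume v: "v \<in> Minj" "fixes_pw (A \<union> B) v"
  have "act C v (pls C X Y) = pls C (act C v X) (act C v Y)"
    using ps X Y d v unfolding is_parsummable_def by blast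
  also have "\<dots> = pls C X Y" using sX sY v by (simp add: sups_def fixes_pw_def)
  finally show "act C v (pls C X Y) = pls C X Y" .
qed

lemma ps_facts:
  assumes "is_parsummable C"
  shows "zer C \<in> obj C" "supp C (zer C) = {}"
    "\<And>X Y. X \<in> obj C \<Longrightarrow> Y \<in> obj C \<Longrightarrow> dsj C X Y \<Longrightarrow> pls C X Y \<in> obj C"
    "\<And>X. X \<in> obj C \<Longrightarrow> pls C X (zer C) = X"
    "\<And>f. f \<in> arr C \<Longrightarrow> pls_ar C f (cid C (zer C)) = f"
    "\<And>X. X \<in> obj C \<Longrightarrow> fin_supp C X"
  using assms unfolding is_parsummable_def by (auto 0 0)

lemma dsjI: "sups C A X \<Longrightarrow> supp C Y \<subseteq> B \<Longrightarrow> A \<inter> B = {} \<Longrightarrow> dsj C X Y"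
  unfolding dsj_def by (drule supp_sub) blast

lemma G_obj:
  assumes ps: "is_parsummable C" and "distinct ks"
    and XA: "\<forall>k\<in>set ks. X k \<in> obj C \<and> sups C (A k) (X k)"
    and dj: "\<forall>k\<in>set ks. \<forall>k'\<in>set ks. k \<noteq> k' \<longrightarrow> A k \<inter> A k' = {}"
  shows "lsum C (map X ks) \<in> obj C \<and> supp C (lsum C (map X ks)) \<subseteq> (\<Union>k\<in>set ks. A k)
     \<and> (ks \<noteq> [] \<longrightarrow> sups C (\<Union>k\<in>set ks. A k) (lsum C (map X ks)))"
  using assms(2-)
proof (induction ks)
  case Nil
  then show ?case using ps_facts[OF ps] by (simp add: lsum_def)
next
  case (Cons k ks)
  let ?R = "lsum C (map X ks)"
  have IH: "?R \<in> obj C" "supp C ?R \<subseteq> (\<Union>k\<in>set ks. A k)"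
    "ks \<noteq> [] \<longrightarrow> sups C (\<Union>k\<in>set ks. A k) ?R" using Cons by auto
  have Xk: "X k \<in> obj C" "sups C (A k) (X k)" using Cons.prems by auto
  have dd: "A k \<inter> (\<Union>k\<in>set ks. A k) = {}" using Cons.prems by auto
  have d: "dsj C (X k) ?R" by (rule dsjI[OF Xk(2) IH(2) dd])
  have eq: "lsum C (map X (k # ks)) = pls C (X k) ?R" by (simp add: lsum_def)
  have o: "pls C (X k) ?R \<in> obj C" using ps_facts(3)[OF ps Xk(1) IH(1) d] .
  show ?case
  proof (cases "ks = []")
    case True
    then show ?thesis using eq Xk ps_facts(4)[OF ps Xk(1)] supp_sub[OF Xk(2)]
      by (simp add: lsum_def)
  next
    case False
    have "sups C (A k \<union> (\<Union>k\<in>set ks. A k)) (pls C (X k) ?R)"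
      using sups_pls[OF ps Xk(1) IH(1) Xk(2)] IH(3) False d by blast
    then show ?thesis using eq o supp_sub by simp
  qed
qed

definition good :: "('o,'a,'z) pscat_scheme \<Rightarrow> (nat \<Rightarrow> 'o) \<Rightarrow> (nat \<Rightarrow> nat set) \<Rightarrow> nat list \<Rightarrow> bool" where
  "good C X A ks \<longleftrightarrow> distinct ks \<and> (\<forall>k\<in>set ks. X k \<in> obj C \<and> sups C (A k) (X k)) \<and>
     (\<forall>k\<in>set ks. \<forall>k'\<in>set ks. k \<noteq> k' \<longrightarrow> A k \<inter> A k' = {})"

lemma good_Cons: "good C X A (k # ks) \<Longrightarrow> good C X A ks"
  unfolding good_def by auto

lemma good_dsj:
  assumes ps: "is_parsummable C" and g: "good C X A (k # ks)"
  shows "dsj C (X k) (lsum C (map X ks))" "X k \<in> obj C" "lsum C (map X ks) \<in> obj C"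
proof -
  have "good C X A ks" using good_Cons[OF g] .
  then have R: "lsum C (map X ks) \<in> obj C" "supp C (lsum C (map X ks)) \<subseteq> (\<Union>k\<in>set ks. A k)"
    using G_obj[OF ps] unfolding good_def by blast+
  have Xk: "X k \<in> obj C" "sups C (A k) (X k)" using g by (auto simp: good_def)
  have dd: "A k \<inter> (\<Union>k\<in>set ks. A k) = {}" using g by (auto simp: good_def)
  show "dsj C (X k) (lsum C (map X ks))" by (rule dsjI[OF Xk(2) R(2) dd])
  show "X k \<in> obj C" "lsum C (map X ks) \<in> obj C" using Xk R by auto
qed

lemma cat_facts:
  assumes "is_cat C"
  shows "\<And>X. X \<in> obj C \<Longrightarrow> cid C X \<in> hom C X X"
    "\<And>f g X Y Z. f \<in> hom C X Y \<Longrightarrow> g \<in> hom C Y Z \<Longrightarrow> ccomp C g f \<in> hom C X Z"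
    "\<And>f X Y. f \<in> hom C X Y \<Longrightarrow> ccomp C (cid C Y) f = f"
    "\<And>f X Y. f \<in> hom C X Y \<Longrightarrow> ccomp C f (cid C X) = f"
    "\<And>f g h X Y Z W. f \<in> hom C X Y \<Longrightarrow> g \<in> hom C Y Z \<Longrightarrow> h \<in> hom C Z W \<Longrightarrow>
        ccomp C h (ccomp C g f) = ccomp C (ccomp C h g) f"
  using assms unfolding is_cat_def hom_def by (auto 0 0; metis)+

lemma pls_hom:
  assumes ps: "is_parsummable C" and f: "f \<in> hom C X X'" and g: "g \<in> hom C Y Y'"
    and d: "dsj C X Y" "dsj C X' Y'"
  shows "pls_ar C f g \<in> hom C (pls C X Y) (pls C X' Y')"
proof -
  have "\<forall>f\<in>arr C. \<forall>g\<in>arr C. dsj C (cdom C f) (cdom C g) \<and> dsj C (ccod C f) (ccod C g) \<longrightarrow>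
         pls_ar C f g \<in> hom C (pls C (cdom C f) (cdom C g)) (pls C (ccod C f) (ccod C g))"
    using ps unfolding is_parsummable_def by (elim conjE) assumption
  then show ?thesis using f g d unfolding hom_def by auto
qed

lemma pls_id:
  assumes ps: "is_parsummable C" and "X \<in> obj C" "Y \<in> obj C" "dsj C X Y"
  shows "pls_ar C (cid C X) (cid C Y) = cid C (pls C X Y)"
proof -
  have "\<forall>X\<in>obj C. \<forall>Y\<in>obj C. dsj C X Y \<longrightarrow> pls_ar C (cid C X) (cid C Y) = cid C (pls C X Y)"
    using ps unfolding is_parsummable_def by (elim conjE) assumption
  then show ?thesis using assms by auto
qed

lemma pls_interchange:
  assumes ps: "is_parsummable C" and h: "f \<in> hom C X X'" "f' \<in> hom C X' X''"
        "g \<in> hom C Y Y'" "g' \<in> hom C Y' Y''" and d: "dsj C X Y" "dsj C X' Y'" "dsj C X'' Y''"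
  shows "pls_ar C (ccomp C f' f) (ccomp C g' g) = ccomp C (pls_ar C f' g') (pls_ar C f g)"
proof -
  have "\<forall>f\<in>arr C. \<forall>f'\<in>arr C. \<forall>g\<in>arr C. \<forall>g'\<in>arr C.
         ccod C f = cdom C f' \<and> ccod C g = cdom C g' \<and>
         dsj C (cdom C f) (cdom C g) \<and> dsj C (ccod C f) (ccod C g) \<and> dsj C (ccod C f') (ccod C g') \<longrightarrow>
         pls_ar C (ccomp C f' f) (ccomp C g' g) = ccomp C (pls_ar C f' g') (pls_ar C f g)"
    using ps unfolding is_parsummable_def by (elim conjE) assumption
  then show ?thesis using h d unfolding hom_def by auto
qed



lemma G_hom:
  assumes ps: "is_parsummable C" and gX: "good C X A ks" and gY: "good C Y B ks"
    and f: "\<forall>k\<in>set ks. f k \<in> hom C (X k) (Y k)"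
  shows "lsum_ar C (map f ks) \<in> hom C (lsum C (map X ks)) (lsum C (map Y ks))"
  using gX gY f
proof (induction ks)
  case Nil
  then show ?case using cat_facts(1)[OF EM_cat[OF PS_EM[OF ps]]] ps_facts(1)[OF ps]
    by (simp add: lsum_def lsum_ar_def)
next
  case (Cons k ks)
  have IH: "lsum_ar C (map f ks) \<in> hom C (lsum C (map X ks)) (lsum C (map Y ks))"
    using Cons.IH good_Cons[OF Cons.prems(1)] good_Cons[OF Cons.prems(2)] Cons.prems(3) by auto
  show ?case
    using pls_hom[OF ps _ IH good_dsj(1)[OF ps Cons.prems(1)] good_dsj(1)[OF ps Cons.prems(2)]]
      Cons.prems(3) by (simp add: lsum_def lsum_ar_def)
qed

lemma G_comp:
  assumes ps: "is_parsummable C" and gX: "good C X A ks" and gY: "good C Y B ks" and gZ: "good C Z E ks"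
    and f: "\<forall>k\<in>set ks. f k \<in> hom C (X k) (Y k)" and g: "\<forall>k\<in>set ks. g k \<in> hom C (Y k) (Z k)"
  shows "ccomp C (lsum_ar C (map g ks)) (lsum_ar C (map f ks)) = lsum_ar C (map (\<lambda>k. ccomp C (g k) (f k)) ks)"
  using gX gY gZ f g
proof (induction ks)
  case Nil
  then show ?case using cat_facts(3)[OF EM_cat[OF PS_EM[OF ps]] cat_facts(1)[OF EM_cat[OF PS_EM[OF ps]]]] ps_facts(1)[OF ps]
    by (simp add: lsum_def lsum_ar_def)
next
  case (Cons k ks)
  have gs: "good C X A ks" "good C Y B ks" "good C Z E ks" using Cons.prems good_Cons by blast+
  have IH: "ccomp C (lsum_ar C (map g ks)) (lsum_ar C (map f ks)) = lsum_ar C (map (\<lambda>k. ccomp C (g k) (f k)) ks)"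
    using Cons.IH gs Cons.prems by auto
  have hf: "lsum_ar C (map f ks) \<in> hom C (lsum C (map X ks)) (lsum C (map Y ks))"
    using G_hom[OF ps gs(1) gs(2)] Cons.prems by auto
  have hg: "lsum_ar C (map g ks) \<in> hom C (lsum C (map Y ks)) (lsum C (map Z ks))"
    using G_hom[OF ps gs(2) gs(3)] Cons.prems by auto
  have "pls_ar C (ccomp C (g k) (f k)) (ccomp C (lsum_ar C (map g ks)) (lsum_ar C (map f ks)))
     = ccomp C (pls_ar C (g k) (lsum_ar C (map g ks))) (pls_ar C (f k) (lsum_ar C (map f ks)))"
    by (rule pls_interchange[OF ps _ _ hf hg good_dsj(1)[OF ps Cons.prems(1)] good_dsj(1)[OF ps Cons.prems(2)]
          good_dsj(1)[OF ps Cons.prems(3)]]) (use Cons.prems in auto)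
  then show ?case using IH by (simp add: lsum_ar_def)
qed

lemma G_id:
  assumes ps: "is_parsummable C" and gX: "good C X A ks"
  shows "lsum_ar C (map (\<lambda>k. cid C (X k)) ks) = cid C (lsum C (map X ks))"
  using gX
proof (induction ks)
  case Nil
  then show ?case by (simp add: lsum_def lsum_ar_def)
next
  case (Cons k ks)
  then have IH: "lsum_ar C (map (\<lambda>k. cid C (X k)) ks) = cid C (lsum C (map X ks))" using good_Cons[OF Cons.prems] by auto
  show ?case using pls_id[OF ps good_dsj(2,3,1)[OF ps Cons.prems]] IH by (simp add: lsum_def lsum_ar_def)
qed



lemma EM_brk_hom: assumes "is_EM C" "inj u" "inj v" "X \<in> obj C"
  shows "brk C v u X \<in> hom C (act C u X) (act C v X)"
proof -
  have "\<forall>u\<in>Minj. \<forall>v\<in>Minj. \<forall>X\<in>obj C. brk C v u X \<in> hom C (act C u X) (act C v X)"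
    using assms(1) unfolding is_EM_def by (elim conjE) assumption
  then show ?thesis using assms by (simp add: Minj_def)
qed
lemma EM_brk_refl: assumes "is_EM C" "inj u" "X \<in> obj C"
  shows "brk C u u X = cid C (act C u X)"
proof -
  have "\<forall>u\<in>Minj. \<forall>X\<in>obj C. brk C u u X = cid C (act C u X)"
    using assms(1) unfolding is_EM_def by (elim conjE) assumption
  then show ?thesis using assms by (simp add: Minj_def)
qed
lemma EM_brk_comp: assumes "is_EM C" "inj u" "inj v" "inj w" "X \<in> obj C"
  shows "ccomp C (brk C w v X) (brk C v u X) = brk C w u X"
proof -
  have "\<forall>u\<in>Minj. \<forall>v\<in>Minj. \<forall>w\<in>Minj. \<forall>X\<in>obj C.
         ccomp C (brk C w v X) (brk C v u X) = brk C w u X"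
    using assms(1) unfolding is_EM_def by (elim conjE) assumption
  then show ?thesis using assms by (simp add: Minj_def)
qed
lemma EM_act_obj: assumes "is_EM C" "inj u" "X \<in> obj C" shows "act C u X \<in> obj C"
proof -
  have "\<forall>u\<in>Minj. is_functor C C (act C u) (act_ar C u)"
    using assms(1) unfolding is_EM_def by (elim conjE) assumption
  then show ?thesis using assms by (simp add: Minj_def is_functor_def)
qed

definition SA :: "('o,'a,'z) pscat_scheme \<Rightarrow> 'o list \<Rightarrow> nat \<Rightarrow> nat set" where
  "SA C Xs k = (SOME A. sups C A (Xs ! k))"

lemma SA_sups: "is_parsummable C \<Longrightarrow> Xs ! k \<in> obj C \<Longrightarrow> sups C (SA C Xs k) (Xs ! k)"
  unfolding SA_def using ps_facts(6)[of C "Xs ! k"] unfolding fin_supp_def sups_def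
  by (rule someI_ex) 

lemma injm_inj: "injm m phi \<Longrightarrow> k < m \<Longrightarrow> inj (phi k)"
  unfolding injm_def inj_on_def inj_def by auto

lemma injm_disj: "injm m phi \<Longrightarrow> k < m \<Longrightarrow> k' < m \<Longrightarrow> k \<noteq> k' \<Longrightarrow> phi k ` S \<inter> phi k' ` S' = {}"
proof (rule ccontr)
  assume m: "injm m phi" "k < m" "k' < m" "k \<noteq> k'" "phi k ` S \<inter> phi k' ` S' \<noteq> {}"
  then obtain a b where ab: "phi k a = phi k' b" by blast
  have "(k, a) = (k', b)"
    using m(1) m(2,3) ab unfolding injm_def inj_on_def by (metis (no_types, lifting) UNIV_I case_prod_conv lessThan_iff mem_Sigma_iff)
  then show False using m(4) by simp
qed

lemma good_phis:
  assumes ps: "is_parsummable C" and Xs: "set Xs \<subseteq> obj C" and phi: "injm (length Xs) phi"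
  shows "good C (\<lambda>k. act C (phi k) (Xs ! k)) (\<lambda>k. phi k ` SA C Xs k) [0..<length Xs]"
  unfolding good_def
proof (intro conjI ballI impI)
  show "distinct [0..<length Xs]" by simp
  fix k assume k: "k \<in> set [0..<length Xs]"
  then have kk: "k < length Xs" "Xs ! k \<in> obj C" using Xs by auto
  show "act C (phi k) (Xs ! k) \<in> obj C"
    using EM_act_obj[OF PS_EM[OF ps] injm_inj[OF phi kk(1)] kk(2)] .
  show "sups C (phi k ` SA C Xs k) (act C (phi k) (Xs ! k))"
    using sups_act[OF PS_EM[OF ps] kk(2) SA_sups[OF ps kk(2)] injm_inj[OF phi kk(1)]] .
  fix k' assume "k' \<in> set [0..<length Xs]" "k \<noteq> k'"
  then show "phi k ` SA C Xs k \<inter> phi k' ` SA C Xs k' = {}"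
    using injm_disj[OF phi kk(1)] by simp
qed

lemma PH_obj:
  assumes ps: "is_parsummable C" and Xs: "set Xs \<subseteq> obj C" and phi: "injm (length Xs) phi"
  shows "phis C phi Xs \<in> obj C"
proof -
  have "good C (\<lambda>k. act C (phi k) (Xs ! k)) (\<lambda>k. phi k ` SA C Xs k) [0..<length Xs]"
    by (rule good_phis[OF ps Xs phi])
  then have a: "distinct [0..<length Xs]" "\<forall>k\<in>set [0..<length Xs]. act C (phi k) (Xs ! k) \<in> obj C \<and> sups C (phi k ` SA C Xs k) (act C (phi k) (Xs ! k))"
     "\<forall>k\<in>set [0..<length Xs]. \<forall>k'\<in>set [0..<length Xs]. k \<noteq> k' \<longrightarrow> phi k ` SA C Xs k \<inter> phi k' ` SA C Xs k' = {}"
    unfolding good_def by auto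
  show ?thesis unfolding phis_def using G_obj[OF ps a] by (rule conjunct1)
qed

lemma nth_obj: "set Xs \<subseteq> obj C \<Longrightarrow> k \<in> set [0..<length Xs] \<Longrightarrow> Xs ! k \<in> obj C \<and> k < length Xs"
  by auto

lemma BR_hom:
  assumes ps: "is_parsummable C" and Xs: "set Xs \<subseteq> obj C" and phi: "injm (length Xs) phi"
    and phi': "injm (length Xs) phi'"
  shows "brks C phi' phi Xs \<in> hom C (phis C phi Xs) (phis C phi' Xs)"
  unfolding brks_def phis_def
proof (rule G_hom[OF ps good_phis[OF ps Xs phi] good_phis[OF ps Xs phi']], rule ballI)
  fix k assume "k \<in> set [0..<length Xs]"
  from nth_obj[OF Xs this] show "brk C (phi' k) (phi k) (Xs ! k) \<in> hom C (act C (phi k) (Xs ! k)) (act C (phi' k) (Xs ! k))"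
    using EM_brk_hom[OF PS_EM[OF ps] injm_inj[OF phi] injm_inj[OF phi']] by blast
qed

lemma BR_comp:
  assumes ps: "is_parsummable C" and Xs: "set Xs \<subseteq> obj C" and phi: "injm (length Xs) phi"
    and phi': "injm (length Xs) phi'" and phi'': "injm (length Xs) phi''"
  shows "ccomp C (brks C phi'' phi' Xs) (brks C phi' phi Xs) = brks C phi'' phi Xs"
proof -
  have "ccomp C (brks C phi'' phi' Xs) (brks C phi' phi Xs) =
    lsum_ar C (map (\<lambda>k. ccomp C (brk C (phi'' k) (phi' k) (Xs ! k)) (brk C (phi' k) (phi k) (Xs ! k))) [0..<length Xs])"
    unfolding brks_def
  proof (rule G_comp[OF ps good_phis[OF ps Xs phi] good_phis[OF ps Xs phi'] good_phis[OF ps Xs phi'']]; rule ballI)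
    fix k assume "k \<in> set [0..<length Xs]"
    from nth_obj[OF Xs this] show "brk C (phi' k) (phi k) (Xs ! k) \<in> hom C (act C (phi k) (Xs ! k)) (act C (phi' k) (Xs ! k))"
      using EM_brk_hom[OF PS_EM[OF ps] injm_inj[OF phi] injm_inj[OF phi']] by blast
  next
    fix k assume "k \<in> set [0..<length Xs]"
    from nth_obj[OF Xs this] show "brk C (phi'' k) (phi' k) (Xs ! k) \<in> hom C (act C (phi' k) (Xs ! k)) (act C (phi'' k) (Xs ! k))"
      using EM_brk_hom[OF PS_EM[OF ps] injm_inj[OF phi'] injm_inj[OF phi'']] by blast
  qed
  also have "\<dots> = brks C phi'' phi Xs" unfolding brks_def
  proof (rule arg_cong[where f="lsum_ar C"], rule map_cong[OF refl])
    fix k assume "k \<in> set [0..<length Xs]"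
    from nth_obj[OF Xs this] show "ccomp C (brk C (phi'' k) (phi' k) (Xs ! k)) (brk C (phi' k) (phi k) (Xs ! k)) = brk C (phi'' k) (phi k) (Xs ! k)"
      using EM_brk_comp[OF PS_EM[OF ps] injm_inj[OF phi] injm_inj[OF phi'] injm_inj[OF phi'']] by blast
  qed
  finally show ?thesis .
qed

lemma BR_id:
  assumes ps: "is_parsummable C" and Xs: "set Xs \<subseteq> obj C" and phi: "injm (length Xs) phi"
  shows "brks C phi phi Xs = cid C (phis C phi Xs)"
proof -
  have "brks C phi phi Xs = lsum_ar C (map (\<lambda>k. cid C (act C (phi k) (Xs ! k))) [0..<length Xs])"
    unfolding brks_def
  proof (rule arg_cong[where f="lsum_ar C"], rule map_cong[OF refl])
    fix k assume "k \<in> set [0..<length Xs]"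
    from nth_obj[OF Xs this] show "brk C (phi k) (phi k) (Xs ! k) = cid C (act C (phi k) (Xs ! k))"
      using EM_brk_refl[OF PS_EM[OF ps] injm_inj[OF phi]] by blast
  qed
  also have "\<dots> = cid C (phis C phi Xs)" unfolding phis_def
    by (rule G_id[OF ps good_phis[OF ps Xs phi]])
  finally show ?thesis .
qed



lemma mem_cls: "(a, b, c) \<in> sig_cls C Xs Ys (psi, f, phi) \<longleftrightarrow>
   injm (length Xs) c \<and> injm (length Ys) a \<and>
   b = ccomp C (brks C a psi Ys) (ccomp C f (brks C phi c Xs))"
  unfolding sig_cls_def by auto

locale sctx =
  fixes C :: "('o,'a,'z) pscat_scheme" and Xs Ys :: "'o list"
  assumes ps: "is_parsummable C" and Xs: "set Xs \<subseteq> obj C" and Ys: "set Ys \<subseteq> obj C"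
begin

lemma cat: "is_cat C" using EM_cat[OF PS_EM[OF ps]] .
lemmas cmp = cat_facts(2)[OF cat]
lemmas as = cat_facts(5)[OF cat]
lemmas idl = cat_facts(3)[OF cat]
lemmas idr = cat_facts(4)[OF cat]

lemma cls_trip:
  assumes t: "sig_trip C Xs Ys (psi, f, phi)" and m: "(a, b, c) \<in> sig_cls C Xs Ys (psi, f, phi)"
  shows "sig_trip C Xs Ys (a, b, c)"
proof -
  have i: "injm (length Xs) phi" "injm (length Ys) psi" "f \<in> hom C (phis C phi Xs) (phis C psi Ys)"
    using t by (auto simp: sig_trip_def)
  have j: "injm (length Xs) c" "injm (length Ys) a"
    "b = ccomp C (brks C a psi Ys) (ccomp C f (brks C phi c Xs))" using m by (auto simp: mem_cls)
  have "b \<in> hom C (phis C c Xs) (phis C a Ys)"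
    unfolding j(3) by (rule cmp[OF cmp[OF BR_hom[OF ps Xs j(1) i(1)] i(3)] BR_hom[OF ps Ys i(2) j(2)]])
  then show ?thesis using j by (simp add: sig_trip_def)
qed

lemma self_mem:
  assumes t: "sig_trip C Xs Ys (psi, f, phi)"
  shows "(psi, f, phi) \<in> sig_cls C Xs Ys (psi, f, phi)"
proof -
  have i: "injm (length Xs) phi" "injm (length Ys) psi" "f \<in> hom C (phis C phi Xs) (phis C psi Ys)"
    using t by (auto simp: sig_trip_def)
  show ?thesis unfolding mem_cls
    using i BR_id[OF ps Xs i(1)] BR_id[OF ps Ys i(2)] idl[OF i(3)] idr[OF i(3)] by simp
qed

lemma rep_mem:
  assumes t: "sig_trip C Xs Ys t"
  shows "rep (sig_cls C Xs Ys t) \<in> sig_cls C Xs Ys t"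
proof -
  obtain psi f phi where tt: "t = (psi, f, phi)" by (cases t) auto
  show ?thesis unfolding rep_def by (rule someI[of _ t]) (use self_mem t tt in auto)
qed

lemma K:
  assumes t: "sig_trip C Xs Ys (psi, f, phi)" and m: "(psi1, f1, phi1) \<in> sig_cls C Xs Ys (psi, f, phi)"
  shows "sig_cls C Xs Ys (psi1, f1, phi1) = sig_cls C Xs Ys (psi, f, phi)"
proof -
  have i: "injm (length Xs) phi" "injm (length Ys) psi" "f \<in> hom C (phis C phi Xs) (phis C psi Ys)"
    using t by (auto simp: sig_trip_def)
  have j: "injm (length Xs) phi1" "injm (length Ys) psi1"
    "f1 = ccomp C (brks C psi1 psi Ys) (ccomp C f (brks C phi phi1 Xs))" using m by (auto simp: mem_cls)
  have eq: "ccomp C (brks C a psi1 Ys) (ccomp C f1 (brks C phi1 c Xs)) =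
            ccomp C (brks C a psi Ys) (ccomp C f (brks C phi c Xs))"
    if c: "injm (length Xs) c" and a: "injm (length Ys) a" for a c
  proof -
    note h1 = BR_hom[OF ps Xs c j(1)] and h2 = BR_hom[OF ps Xs j(1) i(1)]
      and h3 = BR_hom[OF ps Ys i(2) j(2)] and h4 = BR_hom[OF ps Ys j(2) a]
    have "ccomp C f1 (brks C phi1 c Xs) = ccomp C (brks C psi1 psi Ys) (ccomp C (ccomp C f (brks C phi phi1 Xs)) (brks C phi1 c Xs))"
      unfolding j(3) by (rule as[OF h1 cmp[OF h2 i(3)] h3, symmetric])
    also have "ccomp C (ccomp C f (brks C phi phi1 Xs)) (brks C phi1 c Xs) = ccomp C f (brks C phi c Xs)"
      using as[OF h1 h2 i(3), symmetric] BR_comp[OF ps Xs c j(1) i(1)] by simp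
    finally have e1: "ccomp C f1 (brks C phi1 c Xs) = ccomp C (brks C psi1 psi Ys) (ccomp C f (brks C phi c Xs))" .
    have hh: "ccomp C f (brks C phi c Xs) \<in> hom C (phis C c Xs) (phis C psi Ys)"
      by (rule cmp[OF BR_hom[OF ps Xs c i(1)] i(3)])
    show ?thesis unfolding e1 using as[OF hh h3 h4] BR_comp[OF ps Ys i(2) j(2) a] by simp
  qed
  show ?thesis
  proof (rule set_eqI)
    fix x :: "'a trip" obtain a b c where x: "x = (a, b, c)" by (cases x) auto
    show "x \<in> sig_cls C Xs Ys (psi1, f1, phi1) \<longleftrightarrow> x \<in> sig_cls C Xs Ys (psi, f, phi)"
      unfolding x mem_cls using eq by auto
  qed
qed

end



lemma injm_pe: "injm m pe"
  unfolding injm_def pe_def inj_on_def by (auto simp: prod_encode_eq)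

lemma idc_trip:
  assumes ps: "is_parsummable C" and Xs: "set Xs \<subseteq> obj C"
  shows "sig_trip C Xs Xs (pe, cid C (phis C pe Xs), pe)"
  unfolding sig_trip_def using injm_pe cat_facts(1)[OF EM_cat[OF PS_EM[OF ps]] PH_obj[OF ps Xs injm_pe]] by simp

lemma idc_cls:
  assumes ps: "is_parsummable C" and Xs: "set Xs \<subseteq> obj C"
  shows "is_sig_cls C Xs Xs (sig_idc C Xs)"
  unfolding is_sig_cls_def sig_idc_def using Xs idc_trip[OF ps Xs] by blast

lemma rep_idc:
  assumes ps: "is_parsummable C" and Ys: "set Ys \<subseteq> obj C"
  obtains rho theta where "rep (sig_idc C Ys) = (rho, brks C rho theta Ys, theta)"
    "injm (length Ys) rho" "injm (length Ys) theta"
proof -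
  interpret sctx C Ys Ys using ps Ys by unfold_locales auto
  obtain rho g theta where r: "rep (sig_idc C Ys) = (rho, g, theta)" by (cases "rep (sig_idc C Ys)") auto
  have "(rho, g, theta) \<in> sig_idc C Ys" using rep_mem[OF idc_trip[OF ps Ys]] r unfolding sig_idc_def by simp
  then have j: "injm (length Ys) theta" "injm (length Ys) rho"
    "g = ccomp C (brks C rho pe Ys) (ccomp C (cid C (phis C pe Ys)) (brks C pe theta Ys))"
    unfolding sig_idc_def mem_cls by auto
  have "g = brks C rho theta Ys"
    unfolding j(3) idl[OF BR_hom[OF ps Ys j(1) injm_pe]] BR_comp[OF ps Ys j(1) injm_pe j(2)] ..
  then show ?thesis using that r j by simp
qed

lemma unit_left:
  assumes ps: "is_parsummable C" and c: "is_sig_cls C Xs Ys c"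
  shows "sig_comp C Xs Ys Ys (sig_idc C Ys) c = c"
proof -
  have Xs: "set Xs \<subseteq> obj C" and Ys: "set Ys \<subseteq> obj C" using c by (auto simp: is_sig_cls_def)
  interpret sctx C Xs Ys using ps Xs Ys by unfold_locales auto
  obtain t0 where t0: "sig_trip C Xs Ys t0" "c = sig_cls C Xs Ys t0" using c by (auto simp: is_sig_cls_def)
  obtain psi0 f0 phi0 where t0e: "t0 = (psi0, f0, phi0)" by (cases t0) auto
  obtain psi f phi where r: "rep c = (psi, f, phi)" by (cases "rep c") auto
  have mem: "(psi, f, phi) \<in> sig_cls C Xs Ys (psi0, f0, phi0)" using rep_mem[OF t0(1)] r t0 t0e by simp
  have tr: "sig_trip C Xs Ys (psi, f, phi)" using cls_trip[OF t0(1)[unfolded t0e] mem] .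
  have cK: "c = sig_cls C Xs Ys (psi, f, phi)" using K[OF t0(1)[unfolded t0e] mem] t0 t0e by simp
  have i: "injm (length Xs) phi" "injm (length Ys) psi" "f \<in> hom C (phis C phi Xs) (phis C psi Ys)"
    using tr by (auto simp: sig_trip_def)
  obtain rho theta where ri: "rep (sig_idc C Ys) = (rho, brks C rho theta Ys, theta)"
    "injm (length Ys) rho" "injm (length Ys) theta" using rep_idc[OF ps Ys] by blast
  have e: "ccomp C (brks C rho theta Ys) (ccomp C (brks C theta psi Ys) f) = ccomp C (brks C rho psi Ys) f"
    using as[OF i(3) BR_hom[OF ps Ys i(2) ri(3)] BR_hom[OF ps Ys ri(3) ri(2)]]
      BR_comp[OF ps Ys i(2) ri(3) ri(2)] by simp
  have m2: "(rho, ccomp C (brks C rho psi Ys) f, phi) \<in> sig_cls C Xs Ys (psi, f, phi)"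
    unfolding mem_cls using i ri BR_id[OF ps Xs i(1)] idr[OF i(3)] by simp
  have "sig_comp C Xs Ys Ys (sig_idc C Ys) c = sig_cls C Xs Ys (rho, ccomp C (brks C rho psi Ys) f, phi)"
    unfolding sig_comp_def r ri(1) using e by simp
  also have "\<dots> = c" using K[OF tr m2] cK by simp
  finally show ?thesis .
qed

lemma unit_right:
  assumes ps: "is_parsummable C" and c: "is_sig_cls C Xs Ys c"
  shows "sig_comp C Xs Xs Ys c (sig_idc C Xs) = c"
proof -
  have Xs: "set Xs \<subseteq> obj C" and Ys: "set Ys \<subseteq> obj C" using c by (auto simp: is_sig_cls_def)
  interpret sctx C Xs Ys using ps Xs Ys by unfold_locales auto
  obtain t0 where t0: "sig_trip C Xs Ys t0" "c = sig_cls C Xs Ys t0" using c by (auto simp: is_sig_cls_def)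
  obtain psi0 f0 phi0 where t0e: "t0 = (psi0, f0, phi0)" by (cases t0) auto
  obtain rho g theta where r: "rep c = (rho, g, theta)" by (cases "rep c") auto
  have mem: "(rho, g, theta) \<in> sig_cls C Xs Ys (psi0, f0, phi0)" using rep_mem[OF t0(1)] r t0 t0e by simp
  have tr: "sig_trip C Xs Ys (rho, g, theta)" using cls_trip[OF t0(1)[unfolded t0e] mem] .
  have cK: "c = sig_cls C Xs Ys (rho, g, theta)" using K[OF t0(1)[unfolded t0e] mem] t0 t0e by simp
  have i: "injm (length Xs) theta" "injm (length Ys) rho" "g \<in> hom C (phis C theta Xs) (phis C rho Ys)"
    using tr by (auto simp: sig_trip_def)
  obtain psi phi where ri: "rep (sig_idc C Xs) = (psi, brks C psi phi Xs, phi)"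
    "injm (length Xs) psi" "injm (length Xs) phi" using rep_idc[OF ps Xs] by blast
  have e: "ccomp C (brks C theta psi Xs) (brks C psi phi Xs) = brks C theta phi Xs"
    using BR_comp[OF ps Xs ri(3) ri(2) i(1)] .
  have m2: "(rho, ccomp C g (brks C theta phi Xs), phi) \<in> sig_cls C Xs Ys (rho, g, theta)"
    unfolding mem_cls using i ri BR_id[OF ps Ys i(2)] idl[OF cmp[OF BR_hom[OF ps Xs ri(3) i(1)] i(3)]] by simp
  have "sig_comp C Xs Xs Ys c (sig_idc C Xs) = sig_cls C Xs Ys (rho, ccomp C g (brks C theta phi Xs), phi)"
    unfolding sig_comp_def r ri(1) using e by simp
  also have "\<dots> = c" using K[OF tr m2] cK by simp
  finally show ?thesis .
qed



definition flat :: "'o pobj \<Rightarrow> 'o pobj" where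
  "flat P = (\<lambda>i. if i < length (catP P) then [catP P ! i] else [])"

lemma bnd_flat: "bnd (flat P) = length (catP P)"
  unfolding bnd_def
proof (rule Least_equality)
  show "\<forall>i\<ge>length (catP P). flat P i = []" by (simp add: flat_def)
  fix N assume "\<forall>i\<ge>N. flat P i = []"
  then show "length (catP P) \<le> N" by (metis flat_def not_Cons_self2 not_le order_refl)
qed

lemma concat_single: "concat (map (\<lambda>i. [f i]) xs) = map f xs"
  by (induction xs) auto

lemma catP_flat: "catP (flat P) = catP P"
proof -
  have "catP (flat P) = concat (map (\<lambda>i. [catP P ! i]) [0..<length (catP P)])"
    unfolding catP_def[of "flat P"] bnd_flat by (rule arg_cong[where f=concat]) (auto simp: flat_def)
  also have "\<dots> = catP P" by (simp add: concat_single map_nth)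
  finally show ?thesis .
qed

lemma catP_ob: "P \<in> PhiOb C \<Longrightarrow> set (catP P) \<subseteq> obj C"
  unfolding PhiOb_def catP_def by auto

lemma flat_ob: "set (catP P) \<subseteq> obj C \<Longrightarrow> flat P \<in> ThetaOb C"
proof -
  assume a: "set (catP P) \<subseteq> obj C"
  have "finite {i. flat P i \<noteq> []}" by (rule finite_subset[of _ "{..<length (catP P)}"]) (auto simp: flat_def split: if_splits)
  moreover have "set (flat P i) \<subseteq> obj C" for i using a by (auto simp: flat_def)
  ultimately show ?thesis by (auto simp: ThetaOb_def PhiOb_def flat_def)
qed

lemma Th_simps:
  "obj (Theta C) = ThetaOb C" "arr (Theta C) = {a \<in> PhiAr C. fst a \<in> ThetaOb C \<and> fst (snd a) \<in> ThetaOb C}"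
  "cdom (Theta C) = fst" "ccod (Theta C) = (\<lambda>a. fst (snd a))" "cid (Theta C) = phi_id C"
  "ccomp (Theta C) = phi_comp C" "act (Theta C) = phi_act" "act_ar (Theta C) = phi_act_ar C"
  "brk (Theta C) = phi_brk C" "zer (Theta C) = (\<lambda>_. [])" "pls (Theta C) = phi_pls"
  "pls_ar (Theta C) = phi_pls_ar C"
  by (simp_all add: Theta_def PhiSig_def)

lemma PS_simps:
  "obj (PhiSig C) = PhiOb C" "arr (PhiSig C) = PhiAr C"
  "cdom (PhiSig C) = fst" "ccod (PhiSig C) = (\<lambda>a. fst (snd a))" "cid (PhiSig C) = phi_id C"
  "ccomp (PhiSig C) = phi_comp C" "act (PhiSig C) = phi_act" "act_ar (PhiSig C) = phi_act_ar C"
  "brk (PhiSig C) = phi_brk C" "zer (PhiSig C) = (\<lambda>_. [])" "pls (PhiSig C) = phi_pls"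
  "pls_ar (PhiSig C) = phi_pls_ar C"
  by (simp_all add: PhiSig_def)

lemma ThetaOb_sub: "ThetaOb C \<subseteq> PhiOb C" by (auto simp: ThetaOb_def)

lemma dsj_eq: "dsj (Theta C) = dsj (PhiSig C)"
  unfolding dsj_def[abs_def] supp_def Th_simps PS_simps ..

lemma incl_functor: "is_functor (Theta C) (PhiSig C) id id"
  unfolding is_functor_def hom_def Th_simps PS_simps using ThetaOb_sub by auto

lemma incl_psmor: "is_psmor (Theta C) (PhiSig C) id id"
  unfolding is_psmor_def using incl_functor
  by (simp add: Th_simps PS_simps dsj_eq)

definition Ga :: "('o,'a) parr \<Rightarrow> ('o,'a) parr" where
  "Ga a = (flat (fst a), flat (fst (snd a)), snd (snd a))"

lemma Ga_functor: "is_functor (PhiSig C) (Theta C) flat Ga"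
  unfolding is_functor_def hom_def Th_simps PS_simps
proof (intro conjI ballI impI)
  fix X assume "X \<in> PhiOb C" then show "flat X \<in> ThetaOb C" by (rule flat_ob[OF catP_ob])
next
  fix f assume f: "f \<in> PhiAr C"
  then have "fst f \<in> PhiOb C" "fst (snd f) \<in> PhiOb C" by (auto simp: PhiAr_def)
  then have o: "flat (fst f) \<in> ThetaOb C" "flat (fst (snd f)) \<in> ThetaOb C" by (auto intro: flat_ob[OF catP_ob])
  show "Ga f \<in> {fa \<in> {a \<in> PhiAr C. fst a \<in> ThetaOb C \<and> fst (snd a) \<in> ThetaOb C}.
              fst fa = flat (fst f) \<and> fst (snd fa) = flat (fst (snd f))}"
    using f o ThetaOb_sub by (auto simp: Ga_def PhiAr_def catP_flat)
next
  fix X show "Ga (phi_id C X) = phi_id C (flat X)" by (simp add: Ga_def phi_id_def catP_flat)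
next
  fix f g show "Ga (phi_comp C g f) = phi_comp C (Ga g) (Ga f)" by (simp add: Ga_def phi_comp_def catP_flat)
qed



lemma idc_arr:
  assumes ps: "is_parsummable C" and P: "P \<in> PhiOb C" and Q: "Q \<in> PhiOb C" and e: "catP Q = catP P"
  shows "(P, Q, sig_idc C (catP P)) \<in> PhiAr C"
  unfolding PhiAr_def using P Q e idc_cls[OF ps catP_ob[OF P]] by simp

lemma idc_idc:
  assumes ps: "is_parsummable C" and L: "set L \<subseteq> obj C"
  shows "sig_comp C L L L (sig_idc C L) (sig_idc C L) = sig_idc C L"
  by (rule unit_left[OF ps idc_cls[OF ps L]])

lemma eta_iso:
  assumes ps: "is_parsummable C" and X: "X \<in> ThetaOb C"
  shows "(X, flat X, sig_idc C (catP X)) \<in> hom (Theta C) X (flat X) \<and> is_iso (Theta C) (X, flat X, sig_idc C (catP X))"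
proof -
  have XP: "X \<in> PhiOb C" using X ThetaOb_sub by blast
  have L: "set (catP X) \<subseteq> obj C" by (rule catP_ob[OF XP])
  have fX: "flat X \<in> ThetaOb C" by (rule flat_ob[OF L])
  have fXP: "flat X \<in> PhiOb C" using fX ThetaOb_sub by blast
  have a1: "(X, flat X, sig_idc C (catP X)) \<in> PhiAr C" by (rule idc_arr[OF ps XP fXP catP_flat])
  have a2: "(flat X, X, sig_idc C (catP X)) \<in> PhiAr C"
    using idc_arr[OF ps fXP XP catP_flat[symmetric]] by (simp add: catP_flat)
  show ?thesis
    unfolding is_iso_def hom_def Th_simps
    using a1 a2 X fX
    by (auto simp: phi_comp_def phi_id_def catP_flat idc_idc[OF ps L] intro!: bexI[of _ "(flat X, X, sig_idc C (catP X))"])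
qed

lemma eps_iso:
  assumes ps: "is_parsummable C" and X: "X \<in> PhiOb C"
  shows "(flat X, X, sig_idc C (catP X)) \<in> hom (PhiSig C) (flat X) X \<and> is_iso (PhiSig C) (flat X, X, sig_idc C (catP X))"
proof -
  have L: "set (catP X) \<subseteq> obj C" by (rule catP_ob[OF X])
  have fX: "flat X \<in> ThetaOb C" by (rule flat_ob[OF L])
  have fXP: "flat X \<in> PhiOb C" using fX ThetaOb_sub by blast
  have a1: "(X, flat X, sig_idc C (catP X)) \<in> PhiAr C" by (rule idc_arr[OF ps X fXP catP_flat])
  have a2: "(flat X, X, sig_idc C (catP X)) \<in> PhiAr C"
    using idc_arr[OF ps fXP X catP_flat[symmetric]] by (simp add: catP_flat)
  show ?thesis
    unfolding is_iso_def hom_def PS_simps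
    using a1 a2
    by (auto simp: phi_comp_def phi_id_def catP_flat idc_idc[OF ps L] intro!: bexI[of _ "(X, flat X, sig_idc C (catP X))"])
qed

lemma arr_cls: "a \<in> PhiAr C \<Longrightarrow> is_sig_cls C (catP (fst a)) (catP (fst (snd a))) (snd (snd a))"
  unfolding PhiAr_def by auto

lemma main_equiv:
  assumes ps: "is_parsummable C"
  shows "cat_equiv (Theta C) (PhiSig C) id id"
  unfolding cat_equiv_def
proof (intro conjI exI)
  show "is_functor (Theta C) (PhiSig C) id id" by (rule incl_functor)
  show "is_functor (PhiSig C) (Theta C) flat Ga" by (rule Ga_functor)
  show "nat_iso (Theta C) (Theta C) id id (flat \<circ> id) (Ga \<circ> id) (\<lambda>X. (X, flat X, sig_idc C (catP X)))"
    unfolding nat_iso_def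
  proof (rule conjI; intro ballI)
    fix X assume "X \<in> obj (Theta C)"
    then show "(X, flat X, sig_idc C (catP X)) \<in> hom (Theta C) (id X) ((flat \<circ> id) X) \<and>
         is_iso (Theta C) (X, flat X, sig_idc C (catP X))" using eta_iso[OF ps] by (simp add: Th_simps)
  next
    fix f assume f: "f \<in> arr (Theta C)"
    then have c: "is_sig_cls C (catP (fst f)) (catP (fst (snd f))) (snd (snd f))" by (intro arr_cls) (simp add: Th_simps)
    show "ccomp (Theta C) (ccod (Theta C) f, flat (ccod (Theta C) f), sig_idc C (catP (ccod (Theta C) f))) (id f) =
          ccomp (Theta C) ((Ga \<circ> id) f) (cdom (Theta C) f, flat (cdom (Theta C) f), sig_idc C (catP (cdom (Theta C) f)))"
      unfolding Th_simps using unit_left[OF ps c] unit_right[OF ps c]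
      by (simp add: phi_comp_def Ga_def catP_flat)
  qed
  show "nat_iso (PhiSig C) (PhiSig C) (id \<circ> flat) (id \<circ> Ga) id id (\<lambda>X. (flat X, X, sig_idc C (catP X)))"
    unfolding nat_iso_def
  proof (rule conjI; intro ballI)
    fix X assume "X \<in> obj (PhiSig C)"
    then show "(flat X, X, sig_idc C (catP X)) \<in> hom (PhiSig C) ((id \<circ> flat) X) (id X) \<and>
         is_iso (PhiSig C) (flat X, X, sig_idc C (catP X))" using eps_iso[OF ps] by (simp add: PS_simps)
  next
    fix f assume f: "f \<in> arr (PhiSig C)"
    then have c: "is_sig_cls C (catP (fst f)) (catP (fst (snd f))) (snd (snd f))" by (intro arr_cls) (simp add: PS_simps)
    show "ccomp (PhiSig C) (flat (ccod (PhiSig C) f), ccod (PhiSig C) f, sig_idc C (catP (ccod (PhiSig C) f))) ((id \<circ> Ga) f) =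
          ccomp (PhiSig C) (id f) (flat (cdom (PhiSig C) f), cdom (PhiSig C) f, sig_idc C (catP (cdom (PhiSig C) f)))"
      unfolding PS_simps using unit_left[OF ps c] unit_right[OF ps c]
      by (simp add: phi_comp_def Ga_def catP_flat)
  qed
qed



lemma Fo_lsum:
  assumes ps: "is_parsummable C" and F: "is_psmor C D Fo Fa" and g: "good C X A ks"
  shows "Fo (lsum C (map X ks)) = lsum D (map (\<lambda>k. Fo (X k)) ks)"
  using g
proof (induction ks)
  case Nil
  then show ?case using F by (simp add: lsum_def is_psmor_def)
next
  case (Cons k ks)
  have IH: "Fo (lsum C (map X ks)) = lsum D (map (\<lambda>k. Fo (X k)) ks)" using Cons.IH good_Cons[OF Cons.prems] by blast
  have "Fo (pls C (X k) (lsum C (map X ks))) = pls D (Fo (X k)) (Fo (lsum C (map X ks)))"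
    using F good_dsj[OF ps Cons.prems] unfolding is_psmor_def by blast
  then show ?case using IH by (simp add: lsum_def)
qed

lemma Fo_phis:
  assumes ps: "is_parsummable C" and F: "is_psmor C D Fo Fa" and Xs: "set Xs \<subseteq> obj C"
    and phi: "injm (length Xs) phi"
  shows "Fo (phis C phi Xs) = phis D phi (map Fo Xs)"
proof -
  have "Fo (phis C phi Xs) = lsum D (map (\<lambda>k. Fo (act C (phi k) (Xs ! k))) [0..<length Xs])"
    unfolding phis_def by (rule Fo_lsum[OF ps F good_phis[OF ps Xs phi]])
  also have "\<dots> = phis D phi (map Fo Xs)" unfolding phis_def
  proof (simp, rule arg_cong[where f="lsum D"], rule map_cong[OF refl])
    fix k assume "k \<in> set [0..<length Xs]"
    then have k: "k < length Xs" "Xs ! k \<in> obj C" using Xs by auto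
    have "\<forall>u\<in>Minj. \<forall>X\<in>obj C. Fo (act C u X) = act D u (Fo X)" using F unfolding is_psmor_def by blast
    then show "Fo (act C (phi k) (Xs ! k)) = act D (phi k) (map Fo Xs ! k)"
      using k injm_inj[OF phi k(1)] by (simp add: Minj_def)
  qed
  finally show ?thesis .
qed

lemma catP_PS: "catP (PS_ob Fo P) = map Fo (catP P)"
proof -
  have b: "bnd (PS_ob Fo P) = bnd P" unfolding bnd_def PS_ob_def by simp
  show ?thesis unfolding catP_def b by (simp add: PS_ob_def map_concat comp_def)
qed

lemma PS_ob_Theta:
  assumes F: "is_psmor C D Fo Fa" and P: "P \<in> ThetaOb C"
  shows "PS_ob Fo P \<in> ThetaOb D"
proof -
  have o: "\<forall>X\<in>obj C. Fo X \<in> obj D" using F unfolding is_psmor_def is_functor_def by blast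
  show ?thesis using P o unfolding ThetaOb_def PhiOb_def PS_ob_def by auto
qed

lemma part2:
  assumes ps: "is_parsummable C" and F: "is_psmor C D Fo Fa" and a: "a \<in> arr (Theta C)"
  shows "PS_ar D Fo Fa a \<in> arr (Theta D)"
proof -
  obtain P Q c where ae: "a = (P, Q, c)" by (cases a) auto
  have PQ: "P \<in> ThetaOb C" "Q \<in> ThetaOb C" and c: "is_sig_cls C (catP P) (catP Q) c"
    using a ae by (auto simp: Th_simps PhiAr_def)
  let ?X = "catP P" and ?Y = "catP Q"
  have Xs: "set ?X \<subseteq> obj C" and Ys: "set ?Y \<subseteq> obj C" using c by (auto simp: is_sig_cls_def)
  interpret sctx C ?X ?Y using ps Xs Ys by unfold_locales auto
  obtain t0 where t0: "sig_trip C ?X ?Y t0" "c = sig_cls C ?X ?Y t0" using c by (auto simp: is_sig_cls_def)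
  obtain psi0 f0 phi0 where t0e: "t0 = (psi0, f0, phi0)" by (cases t0) auto
  obtain psi f phi where r: "rep c = (psi, f, phi)" by (cases "rep c") auto
  have mem: "(psi, f, phi) \<in> sig_cls C ?X ?Y (psi0, f0, phi0)" using rep_mem[OF t0(1)] r t0 t0e by simp
  have tr: "sig_trip C ?X ?Y (psi, f, phi)" using cls_trip[OF t0(1)[unfolded t0e] mem] .
  have i: "injm (length ?X) phi" "injm (length ?Y) psi" "f \<in> hom C (phis C phi ?X) (phis C psi ?Y)"
    using tr by (auto simp: sig_trip_def)
  have Ff: "is_functor C D Fo Fa" using F by (simp add: is_psmor_def)
  have "Fa f \<in> hom D (Fo (phis C phi ?X)) (Fo (phis C psi ?Y))"
    using Ff i(3) unfolding is_functor_def hom_def by auto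
  then have hf: "Fa f \<in> hom D (phis D phi (map Fo ?X)) (phis D psi (map Fo ?Y))"
    using Fo_phis[OF ps F Xs i(1)] Fo_phis[OF ps F Ys i(2)] by simp
  have o: "\<forall>X\<in>obj C. Fo X \<in> obj D" using Ff unfolding is_functor_def by blast
  have sc: "is_sig_cls D (map Fo ?X) (map Fo ?Y) (sig_cls D (map Fo ?X) (map Fo ?Y) (psi, Fa f, phi))"
    unfolding is_sig_cls_def sig_trip_def using Xs Ys o i hf by auto
  have "PS_ar D Fo Fa a = (PS_ob Fo P, PS_ob Fo Q, sig_cls D (map Fo ?X) (map Fo ?Y) (psi, Fa f, phi))"
    by (simp add: PS_ar_def ae r catP_PS)
  then show ?thesis
    using sc PS_ob_Theta[OF F PQ(1)] PS_ob_Theta[OF F PQ(2)] ThetaOb_sub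
    by (auto simp: Th_simps PhiAr_def catP_PS)
qed

theorem lemma3p19:
  fixes C :: "('o,'a) pscat" and D :: "('p,'b) pscat"
  shows "(is_parsummable C \<longrightarrow>
            cat_equiv (Theta C) (PhiSig C) id id \<and> is_psmor (Theta C) (PhiSig C) id id)
       \<and> (\<forall>Fo Fa. is_parsummable C \<and> is_parsummable D \<and> is_psmor C D Fo Fa \<longrightarrow>
            (\<forall>P\<in>obj (Theta C). id (PS_ob Fo P) = PS_ob Fo (id P) \<and> PS_ob Fo P \<in> obj (Theta D)) \<and>
            (\<forall>a\<in>arr (Theta C). id (PS_ar D Fo Fa a) = PS_ar D Fo Fa (id a) \<and>
                                PS_ar D Fo Fa a \<in> arr (Theta D)))"
proof (intro conjI impI allI ballI)
  assume "is_parsummable C"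
  then show "cat_equiv (Theta C) (PhiSig C) id id" by (rule main_equiv)
  show "is_psmor (Theta C) (PhiSig C) id id" by (rule incl_psmor)
next
  fix Fo :: "'o \<Rightarrow> 'p" and Fa :: "'a \<Rightarrow> 'b" and P
  assume h: "is_parsummable C \<and> is_parsummable D \<and> is_psmor C D Fo Fa" and P: "P \<in> obj (Theta C)"
  show "id (PS_ob Fo P) = PS_ob Fo (id P)" by simp
  show "PS_ob Fo P \<in> obj (Theta D)" using PS_ob_Theta[of C D Fo Fa P] h P by (simp add: Th_simps)
next
  fix Fo :: "'o \<Rightarrow> 'p" and Fa :: "'a \<Rightarrow> 'b" and a
  assume h: "is_parsummable C \<and> is_parsummable D \<and> is_psmor C D Fo Fa" and a: "a \<in> arr (Theta C)"
  show "id (PS_ar D Fo Fa a) = PS_ar D Fo Fa (id a)" by simp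
  show "PS_ar D Fo Fa a \<in> arr (Theta D)" using part2[of C D Fo Fa a] h a by blast
qed


end
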